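(* Let $p\ge 0$ and $n\ge 1$ be integers. For every integer $k\ge 0$ with $n\ge (p+1)k$ and every $\alpha\in C_n(p,k)$, the list $\mathcal{D}_p(\alpha)$ is suffix partitioned.
   Context: The weight of a binary word is its number of 1's. For integers $p,k\ge 0$ and $n\ge (p+1)k$, $C_n(p,k)$ is the set of binary words of length $n$ and weight $k$ such that every prefix contains at least $p$ times as many 0's as 1's (i.e. in every prefix, #0's $\ge p\cdot$ #1's). A homogeneous transposition of a binary word exchanges a 1 and a 0 such that no 1 occurs strictly between the two exchanged positions. For a set $S$ of binary words of the same length and weight and $\alpha\in S$, the list obtained by applying the greedy algorithm for $S$ to $\alpha$ is built as follows: start with the list $(\alpha)$; repeatedly, for the last word $w$ of the current list, among all words obtainable from $w$ by one homogeneous transposition that lie in $S$ and do not already occur in the list, choose the one obtained by transposing the leftmost possible 1 with (among transpositions of that 1) the leftmost possible 0, and append it; stop when no such word exists. $\mathcal{D}_p(\alpha)$ denotes the list obtained by applying the greedy algorithm for $C_n(p,k)$ to $\alpha\in C_n(p,k)$. A list is suffix partitioned if, for every word $s$, the words of the list having suffix $s$ occupy consecutive positions. *)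

theory Defs
  imports Main "HOL-Library.Sublist"
begin

text \<open>Binary words are lists of booleans: True = 1, False = 0.\<close>

definition weight :: "bool list \<Rightarrow> nat" where
  "weight w = length (filter id w)"

definition zeros :: "bool list \<Rightarrow> nat" where
  "zeros w = length (filter Not w)"

definition C :: "nat \<Rightarrow> nat \<Rightarrow> nat \<Rightarrow> bool list set" where
  "C n p k = {w. length w = n \<and> weight w = k \<and>
                 (\<forall>i \<le> n. zeros (take i w) \<ge> p * weight (take i w))}"

definition swap_pos :: "bool list \<Rightarrow> nat \<Rightarrow> nat \<Rightarrow> bool list" where
  "swap_pos w i j = w[i := w ! j, j := w ! i]"

definition hom_trans :: "bool list \<Rightarrow> nat \<Rightarrow> nat \<Rightarrow> bool" where
  "hom_trans w i j \<longleftrightarrow> i < length w \<and> j < length w \<and> w ! i \<and> \<not> w ! j \<and>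
     (\<forall>m. min i j < m \<and> m < max i j \<longrightarrow> \<not> w ! m)"

definition cands :: "bool list set \<Rightarrow> bool list list \<Rightarrow> bool list \<Rightarrow> (nat \<times> nat) set" where
  "cands S L w = {(i, j). hom_trans w i j \<and> swap_pos w i j \<in> S \<and> swap_pos w i j \<notin> set L}"

definition greedy_next :: "bool list set \<Rightarrow> bool list list \<Rightarrow> bool list \<Rightarrow> bool list option" where
  "greedy_next S L w =
     (let Cs = cands S L w in
      if Cs = {} then None
      else (let i0 = Min (fst ` Cs); j0 = Min {j. (i0, j) \<in> Cs} in
            Some (swap_pos w i0 j0)))"

text \<open>Iteration with fuel; fuel card S suffices since the list stays
  duplicate-free inside S.\<close>
fun greedy_aux :: "bool list set \<Rightarrow> nat \<Rightarrow> bool list list \<Rightarrow> bool list list" where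
  "greedy_aux S 0 L = L"
| "greedy_aux S (Suc f) L =
     (case greedy_next S L (last L) of
        None \<Rightarrow> L
      | Some w \<Rightarrow> greedy_aux S f (L @ [w]))"

definition greedy :: "bool list set \<Rightarrow> bool list \<Rightarrow> bool list list" where
  "greedy S \<alpha> = greedy_aux S (card S) [\<alpha>]"

definition D :: "nat \<Rightarrow> nat \<Rightarrow> nat \<Rightarrow> bool list \<Rightarrow> bool list list" where
  "D n p k \<alpha> = greedy (C n p k) \<alpha>"

definition suffix_partitioned :: "bool list list \<Rightarrow> bool" where
  "suffix_partitioned L \<longleftrightarrow>
     (\<forall>s a b c. a \<le> b \<and> b \<le> c \<and> c < length L \<and> suffix s (L ! a) \<and> suffix s (L ! c)
        \<longrightarrow> suffix s (L ! b))"

end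

theory Submission
  imports Defs
begin


lemma weight_append[simp]: "weight (xs @ ys) = weight xs + weight ys"
  by (simp add: weight_def)
lemma zeros_append[simp]: "zeros (xs @ ys) = zeros xs + zeros ys"
  by (simp add: zeros_def)
lemma weight_Nil[simp]: "weight [] = 0" by (simp add: weight_def)
lemma zeros_Nil[simp]: "zeros [] = 0" by (simp add: zeros_def)
lemma weight_single[simp]: "weight [b] = (if b then 1 else 0)" by (simp add: weight_def)
lemma zeros_single[simp]: "zeros [b] = (if b then 0 else 1)" by (simp add: zeros_def)
lemma zeros_weight: "zeros w + weight w = length w"
  by (induction w) (auto simp: zeros_def weight_def)

lemma weight_update:
  "i < length xs \<Longrightarrow> weight (xs[i := x]) + (if xs!i then 1 else 0) = weight xs + (if x then 1 else 0)"
proof (induction xs arbitrary: i)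
  case Nil then show ?case by simp
next
  case (Cons a xs)
  show ?case
  proof (cases i)
    case 0 then show ?thesis by (simp add: weight_def)
  next
    case (Suc j)
    then have "j < length xs" using Cons.prems by simp
    from Cons.IH[OF this] Suc show ?thesis by (cases x; cases "xs!j") (simp_all add: weight_def)
  qed
qed

lemma take_snoc_le: "i \<le> length v \<Longrightarrow> take i (v @ [b]) = take i v" by simp

lemma C_snoc:
  "v @ [b] \<in> C (Suc M) p K \<longleftrightarrow>
     v \<in> C M p (if b then K - 1 else K) \<and> (b \<longrightarrow> K \<ge> 1 \<and> (p+1)*K \<le> Suc M)"
    (is "?L \<longleftrightarrow> ?R")
proof
  assume h: ?L
  then have lv: "length v = M" by (simp add: C_def)
  have hall: "\<forall>i\<le>Suc M. zeros (take i (v@[b])) \<ge> p * weight (take i (v@[b]))"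
    using h unfolding C_def by blast
  have pre: "zeros (take i v) \<ge> p * weight (take i v)" if "i \<le> M" for i
  proof -
    have "zeros (take i (v@[b])) \<ge> p * weight (take i (v@[b]))"
      using hall that by simp
    then show ?thesis using take_snoc_le[of i v b] that lv by simp
  qed
  have full: "zeros (v@[b]) \<ge> p * weight (v@[b])"
  proof -
    have "zeros (take (Suc M) (v@[b])) \<ge> p * weight (take (Suc M) (v@[b]))"
      using hall by blast
    then show ?thesis using lv by simp
  qed
  have w: "weight (v@[b]) = K" using h by (simp add: C_def)
  have zw: "zeros v + weight v = M" using zeros_weight[of v] lv by simp
  show ?R
  proof (cases b)
    case True
    then show ?thesis using pre full w zw lv by (auto simp: C_def algebra_simps)
  next
    case False
    then show ?thesis using pre w lv by (auto simp: C_def)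
  qed
next
  assume h: ?R
  then have lv: "length v = M" by (simp add: C_def)
  have pre: "\<forall>i\<le>M. zeros (take i v) \<ge> p * weight (take i v)" using h by (simp add: C_def)
  have zw: "zeros v + weight v = M" using zeros_weight[of v] lv by simp
  have wv: "weight v = (if b then K - 1 else K)" using h by (simp add: C_def)
  have full: "zeros (v@[b]) \<ge> p * weight (v@[b])"
  proof (cases b)
    case True
    then have "K \<ge> 1" "(p+1)*K \<le> Suc M" using h by auto
    then show ?thesis using True zw wv by (auto simp: algebra_simps)
  next
    case False
    then show ?thesis using pre lv wv by (auto dest!: spec[of _ M])
  qed
  have all: "zeros (take i (v@[b])) \<ge> p * weight (take i (v@[b]))" if "i \<le> Suc M" for i
  proof (cases "i \<le> M")
    case True
    then show ?thesis using pre lv take_snoc_le[of i v b] by simp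
  next
    case False
    then have "i = Suc M" using that by simp
    then show ?thesis using full lv by simp
  qed
  have "weight (v@[b]) = K" using wv h by (cases b) auto
  then show ?L using all lv by (simp add: C_def)
qed

lemma C_length: "w \<in> C n p k \<Longrightarrow> length w = n" by (simp add: C_def)

lemma C_bound: "w \<in> C n p k \<Longrightarrow> (p+1)*k \<le> n"
proof -
  assume h: "w \<in> C n p k"
  then have "zeros w \<ge> p * k" "weight w = k" "length w = n"
    by (auto simp: C_def dest!: spec[of _ n])
  then show ?thesis using zeros_weight[of w] by simp
qed



inductive gcomp :: "bool list set \<Rightarrow> bool list list \<Rightarrow> bool list list \<Rightarrow> bool" for S where
  stop: "greedy_next S L (last L) = None \<Longrightarrow> gcomp S L L"
| step: "greedy_next S L (last L) = Some w \<Longrightarrow> gcomp S (L @ [w]) R \<Longrightarrow> gcomp S L R"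

lemma comp_det: "gcomp S L R1 \<Longrightarrow> gcomp S L R2 \<Longrightarrow> R1 = R2"
proof (induction rule: gcomp.induct)
  case (stop L)
  from stop.prems show ?case
    by (cases rule: gcomp.cases) (use stop.hyps in auto)
next
  case (step L w R)
  from step.prems show ?case
    by (cases rule: gcomp.cases) (use step in auto)
qed

lemma cands_finite: "finite (cands S L w)"
proof -
  have "cands S L w \<subseteq> {..<length w} \<times> {..<length w}"
    by (auto simp: cands_def hom_trans_def)
  then show ?thesis by (rule finite_subset) auto
qed

lemma gn_None_iff: "greedy_next S L w = None \<longleftrightarrow> cands S L w = {}"
  by (simp add: greedy_next_def Let_def)

lemma gn_Some_mem:
  assumes "greedy_next S L w = Some v"
  shows "\<exists>i0 j0. (i0, j0) \<in> cands S L w \<and> v = swap_pos w i0 j0 \<and>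
           (\<forall>i j. (i, j) \<in> cands S L w \<longrightarrow> i0 < i \<or> (i = i0 \<and> j0 \<le> j))"
proof -
  let ?Cs = "cands S L w"
  have ne: "?Cs \<noteq> {}" using assms by (auto simp: greedy_next_def Let_def split: if_splits)
  define i0 where "i0 = Min (fst ` ?Cs)"
  define j0 where "j0 = Min {j. (i0, j) \<in> ?Cs}"
  have v: "v = swap_pos w i0 j0" using assms ne by (simp add: greedy_next_def Let_def i0_def j0_def)
  have "i0 \<in> fst ` ?Cs" unfolding i0_def using ne cands_finite by (intro Min_in) auto
  then have ne2: "{j. (i0, j) \<in> ?Cs} \<noteq> {}" by force
  have fin2: "finite {j. (i0, j) \<in> ?Cs}"
  proof -
    have "{j. (i0, j) \<in> ?Cs} \<subseteq> snd ` ?Cs" by force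
    then show ?thesis using cands_finite finite_surj by blast
  qed
  have "j0 \<in> {j. (i0, j) \<in> ?Cs}" unfolding j0_def by (rule Min_in[OF fin2 ne2])
  moreover have "i0 < i \<or> (i = i0 \<and> j0 \<le> j)" if "(i, j) \<in> ?Cs" for i j
  proof -
    have "i0 \<le> i" unfolding i0_def using that cands_finite by (intro Min_le) force+
    moreover have "i = i0 \<Longrightarrow> j0 \<le> j" unfolding j0_def using that fin2 by (intro Min_le) auto
    ultimately show ?thesis by linarith
  qed
  ultimately show ?thesis using v by blast
qed

lemma gn_Some_props:
  assumes "greedy_next S L w = Some v"
  shows "v \<in> S" "v \<notin> set L"
  using gn_Some_mem[OF assms] by (auto simp: cands_def)

lemma gn_char:
  assumes mem: "(i0, j0) \<in> cands S L w"
    and minim: "\<And>i j. (i, j) \<in> cands S L w \<Longrightarrow> i0 < i \<or> (i = i0 \<and> j0 \<le> j)"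
  shows "greedy_next S L w = Some (swap_pos w i0 j0)"
proof -
  let ?Cs = "cands S L w"
  have ne: "?Cs \<noteq> {}" using mem by blast
  have "Min (fst ` ?Cs) = i0"
  proof (rule Min_eqI)
    show "finite (fst ` ?Cs)" using cands_finite by simp
    show "i0 \<in> fst ` ?Cs" using mem by force
    show "y \<in> fst ` ?Cs \<Longrightarrow> i0 \<le> y" for y using minim by force
  qed
  moreover have "Min {j. (i0, j) \<in> ?Cs} = j0"
  proof (rule Min_eqI)
    have "{j. (i0, j) \<in> ?Cs} \<subseteq> snd ` ?Cs" by force
    then show "finite {j. (i0, j) \<in> ?Cs}" using cands_finite finite_surj by blast
    show "j0 \<in> {j. (i0, j) \<in> ?Cs}" using mem by simp
    show "y \<in> {j. (i0, j) \<in> ?Cs} \<Longrightarrow> j0 \<le> y" for y using minim by force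
  qed
  ultimately show ?thesis using ne by (simp add: greedy_next_def Let_def)
qed

lemma comp_props:
  assumes "gcomp S L R"
  shows "\<exists>X. R = L @ X" "greedy_next S R (last R) = None"
    "distinct L \<Longrightarrow> set L \<subseteq> S \<Longrightarrow> distinct R \<and> set R \<subseteq> S"
  using assms
proof (induction rule: gcomp.induct)
  case (stop L)
  { case 1 show ?case by simp }
  { case 2 show ?case by fact }
  { case 3 then show ?case by simp }
next
  case (step L w R)
  { case 1 then show ?case using step.IH(1) by auto }
  { case 2 then show ?case using step.IH(2) by auto }
  { case 3 then show ?case using step.IH(3) gn_Some_props[OF step.hyps(1)] by auto }
qed

lemma comp_greedy_aux:
  assumes "finite S" "distinct L" "set L \<subseteq> S" "L \<noteq> []" "card S \<le> f + length L"
  shows "gcomp S L (greedy_aux S f L)"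
  using assms(2-5)
proof (induction f arbitrary: L)
  case 0
  then have "card (set L) = card S" using distinct_card[of L] card_mono[OF assms(1) 0(2)] by simp
  then have "set L = S" using card_subset_eq[OF assms(1) 0(2)] by simp
  then have "cands S L (last L) = {}" by (auto simp: cands_def)
  then show ?case by (simp add: gn_None_iff stop)
next
  case (Suc f)
  show ?case
  proof (cases "greedy_next S L (last L)")
    case None
    then show ?thesis by (simp add: stop)
  next
    case (Some w)
    have "gcomp S (L @ [w]) (greedy_aux S f (L @ [w]))"
      using Suc gn_Some_props[OF Some] by (intro Suc.IH) auto
    then show ?thesis using Some by (simp add: step)
  qed
qed



lemma ht_snoc:
  assumes "length u = M" "i < M" "j < M"
  shows "hom_trans (u@[c]) i j \<longleftrightarrow> hom_trans u i j"
  using assms by (auto simp: hom_trans_def nth_append)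

lemma swap_snoc:
  assumes "i < length u" "j < length u"
  shows "swap_pos (u@[c]) i j = swap_pos u i j @ [c]"
  using assms by (simp add: swap_pos_def nth_append list_update_append)

lemma swap_snoc_M1:
  assumes "j < length u"
  shows "swap_pos (u@[c]) (length u) j = u[j := c] @ [u!j]"
  using assms by (simp add: swap_pos_def nth_append list_update_append)

lemma swap_snoc_M2:
  assumes "i < length u"
  shows "swap_pos (u@[c]) i (length u) = u[i := c] @ [u!i]"
  using assms by (simp add: swap_pos_def nth_append list_update_append)

definition nocls :: "bool \<Rightarrow> bool list list \<Rightarrow> bool" where
  "nocls c P \<longleftrightarrow> (\<forall>x\<in>set P. \<forall>v. x \<noteq> v @ [c])"

lemma cands_lower:
  assumes "length u = M" "nocls c P" "i < M" "j < M"
  shows "(i,j) \<in> cands S (P @ map (\<lambda>v. v@[c]) Q) (u@[c]) \<longleftrightarrow> (i,j) \<in> cands {v. v@[c] \<in> S} Q u"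
proof -
  have sw: "swap_pos (u@[c]) i j = swap_pos u i j @ [c]" using assms by (simp add: swap_snoc)
  have "swap_pos u i j @ [c] \<notin> set P" using assms(2) by (auto simp: nocls_def)
  then show ?thesis using assms ht_snoc[OF assms(1,3,4)] sw by (auto simp: cands_def)
qed

lemma cands_cross:
  assumes "cands {v. v@[c] \<in> S} Q u = {}" "length u = M" "nocls c P"
    "(i,j) \<in> cands S (P @ map (\<lambda>v. v@[c]) Q) (u@[c])"
  shows "i = M \<or> j = M"
proof -
  have "i < Suc M" "j < Suc M" using assms(2,4) by (auto simp: cands_def hom_trans_def)
  moreover have "\<not> (i < M \<and> j < M)"
    using cands_lower[OF assms(2,3), of i j S Q] assms(1,4) by auto
  ultimately show ?thesis by linarith
qed

lemma gn_step:
  assumes "greedy_next {v. v@[c] \<in> S} Q u = Some u'" "length u = M" "nocls c P"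
  shows "greedy_next S (P @ map (\<lambda>v. v@[c]) Q) (u@[c]) = Some (u'@[c])"
proof -
  let ?S' = "{v. v@[c] \<in> S}"
  let ?L = "P @ map (\<lambda>v. v@[c]) Q"
  obtain i0 j0 where m: "(i0, j0) \<in> cands ?S' Q u" and v: "u' = swap_pos u i0 j0"
    and mn: "\<And>i j. (i, j) \<in> cands ?S' Q u \<Longrightarrow> i0 < i \<or> (i = i0 \<and> j0 \<le> j)"
    using gn_Some_mem[OF assms(1)] by blast
  have ht0: "hom_trans u i0 j0" using m by (simp add: cands_def)
  then have lt: "i0 < M" "j0 < M" "u ! i0" using assms(2) by (auto simp: hom_trans_def)
  have m2: "(i0, j0) \<in> cands S ?L (u@[c])" using cands_lower[OF assms(2,3) lt(1,2)] m by simp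
  have "i0 < i \<or> (i = i0 \<and> j0 \<le> j)" if h: "(i, j) \<in> cands S ?L (u@[c])" for i j
  proof -
    have ht: "hom_trans (u@[c]) i j" using h by (simp add: cands_def)
    then have "i < Suc M" "j < Suc M" using assms(2) by (auto simp: hom_trans_def)
    show ?thesis
    proof (cases "i < M \<and> j < M")
      case True
      then show ?thesis using mn cands_lower[OF assms(2,3), of i j S Q] h by blast
    next
      case False
      then consider "i = M" | "j = M" "i < M" using \<open>i < Suc M\<close> \<open>j < Suc M\<close> by linarith
      then show ?thesis
      proof cases
        case 1 then show ?thesis using lt by simp
      next
        case 2
        have "\<not> (i < i0)"
        proof
          assume "i < i0"
          then have "\<not> (u@[c]) ! i0" using ht 2 lt by (auto simp: hom_trans_def)
          then show False using lt assms(2) by (simp add: nth_append)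
        qed
        then show ?thesis using 2 lt by linarith
      qed
    qed
  qed
  then have "greedy_next S ?L (u@[c]) = Some (swap_pos (u@[c]) i0 j0)"
    by (intro gn_char[OF m2]) blast
  then show ?thesis using v swap_snoc lt assms(2) by simp
qed

lemma block:
  assumes "gcomp S' Q R'" "S' = {v. v@[c] \<in> S}" "\<forall>u\<in>S'. length u = M" "nocls c P"
    "Q \<noteq> []" "set Q \<subseteq> S'" "gcomp S (P @ map (\<lambda>v. v@[c]) R') R"
  shows "gcomp S (P @ map (\<lambda>v. v@[c]) Q) R"
  using assms
proof (induction rule: gcomp.induct)
  case (stop L)
  then show ?case by simp
next
  case (step L w R2)
  have "last L \<in> set L" using step.prems(4) by simp
  then have lq: "length (last L) = M" using step.prems(2,5) by blast
  have "greedy_next S (P @ map (\<lambda>v. v@[c]) L) (last L @ [c]) = Some (w @ [c])"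
    using gn_step[OF _ lq step.prems(3)] step.hyps(1) step.prems(1) by simp
  moreover have "last (P @ map (\<lambda>v. v@[c]) L) = last L @ [c]" using step.prems(4)
    by (simp add: last_map)
  moreover have "gcomp S (P @ map (\<lambda>v. v@[c]) (L @ [w])) R"
    using step.IH step.prems gn_Some_props[OF step.hyps(1)] by auto
  ultimately show ?case by (auto intro: gcomp.step)
qed

lemma cross_result:
  assumes "cands {v. v@[c] \<in> S} Q u = {}" "length u = M" "nocls c P"
    "(i,j) \<in> cands S (P @ map (\<lambda>v. v@[c]) Q) (u@[c])"
  shows "\<exists>v. swap_pos (u@[c]) i j = v @ [\<not> c]"
proof -
  have ht: "hom_trans (u@[c]) i j" using assms(4) by (simp add: cands_def)
  from cands_cross[OF assms] show ?thesis
  proof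
    assume "i = M"
    then have c: "c" and "j < M" "\<not> u ! j" "j \<noteq> M" using ht assms(2)
      by (auto simp: hom_trans_def nth_append split: if_splits)
    then show ?thesis using swap_snoc_M1[of j u c] assms(2) \<open>i = M\<close> by auto
  next
    assume "j = M"
    then have c: "\<not> c" and "i < M" "u ! i" using ht assms(2)
      by (auto simp: hom_trans_def nth_append split: if_splits)
    then show ?thesis using swap_snoc_M2[of i u c] assms(2) \<open>j = M\<close> by auto
  qed
qed

lemma exit_none:
  assumes "cands {v. v@[c] \<in> S} Q u = {}" "length u = M" "nocls c P"
    "\<forall>v. v@[\<not>c] \<in> S \<longrightarrow> v@[\<not>c] \<in> set (P @ map (\<lambda>v. v@[c]) Q)"
  shows "greedy_next S (P @ map (\<lambda>v. v@[c]) Q) (u@[c]) = None"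
proof -
  have "cands S (P @ map (\<lambda>v. v@[c]) Q) (u@[c]) = {}"
  proof (rule ccontr)
    assume "cands S (P @ map (\<lambda>v. v@[c]) Q) (u@[c]) \<noteq> {}"
    then obtain i j where h: "(i,j) \<in> cands S (P @ map (\<lambda>v. v@[c]) Q) (u@[c])" by auto
    obtain v where "swap_pos (u@[c]) i j = v @ [\<not> c]" using cross_result[OF assms(1-3) h] by blast
    then show False using h assms(4) by (auto simp: cands_def)
  qed
  then show ?thesis by (simp add: gn_None_iff)
qed

lemma exit_z:
  assumes "cands {v. v@[True] \<in> S} Q u = {}" "length u = M" "nocls True P"
    "M \<ge> 1" "u ! (M - 1)"
  shows "greedy_next S (P @ map (\<lambda>v. v@[True]) Q) (u@[True]) = None"
proof -
  have "cands S (P @ map (\<lambda>v. v@[True]) Q) (u@[True]) = {}"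
  proof (rule ccontr)
    assume "cands S (P @ map (\<lambda>v. v@[True]) Q) (u@[True]) \<noteq> {}"
    then obtain i j where h: "(i,j) \<in> cands S (P @ map (\<lambda>v. v@[True]) Q) (u@[True])" by auto
    have ht: "hom_trans (u@[True]) i j" using h by (simp add: cands_def)
    from cands_cross[OF assms(1-3) h] show False
    proof
      assume "i = M"
      then have "j < M" "\<not> u ! j" "\<forall>m. j < m \<and> m < M \<longrightarrow> \<not> (u@[True]) ! m"
        using ht assms(2) by (auto simp: hom_trans_def nth_append split: if_splits)
      then show False using assms(4,5) assms(2)
        by (cases "j = M - 1") (auto simp: nth_append dest!: spec[of _ "M - 1"])
    next
      assume "j = M"
      then show False using ht assms(2) by (auto simp: hom_trans_def nth_append)
    qed
  qed
  then show ?thesis by (simp add: gn_None_iff)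
qed

lemma exit_T1:
  assumes "cands {v. v@[True] \<in> S} Q u = {}" "length u = M" "nocls True P"
    "(M, q) \<in> cands S (P @ map (\<lambda>v. v@[True]) Q) (u@[True])"
    "\<And>j. (M, j) \<in> cands S (P @ map (\<lambda>v. v@[True]) Q) (u@[True]) \<Longrightarrow> q \<le> j"
  shows "greedy_next S (P @ map (\<lambda>v. v@[True]) Q) (u@[True]) = Some (u[q := True] @ [False])"
proof -
  have "greedy_next S (P @ map (\<lambda>v. v@[True]) Q) (u@[True]) = Some (swap_pos (u@[True]) M q)"
  proof (rule gn_char[OF assms(4)])
    fix i j assume h: "(i, j) \<in> cands S (P @ map (\<lambda>v. v@[True]) Q) (u@[True])"
    have ht: "hom_trans (u@[True]) i j" using h by (simp add: cands_def)
    have "j \<noteq> M" using ht assms(2) by (auto simp: hom_trans_def nth_append)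
    then have "i = M" using cands_cross[OF assms(1-3) h] by simp
    then show "M < i \<or> (i = M \<and> q \<le> j)" using assms(5) h by simp
  qed
  moreover have "q < M" "\<not> u ! q" using assms(4,2) by (auto simp: cands_def hom_trans_def nth_append split: if_splits)
  ultimately show ?thesis using swap_snoc_M1[of q u True] assms(2) by simp
qed

lemma exit_T2:
  assumes "cands {v. v@[False] \<in> S} Q u = {}" "length u = M" "nocls False P"
    "(i0, M) \<in> cands S (P @ map (\<lambda>v. v@[False]) Q) (u@[False])"
    "\<And>i. (i, M) \<in> cands S (P @ map (\<lambda>v. v@[False]) Q) (u@[False]) \<Longrightarrow> i = i0"
  shows "greedy_next S (P @ map (\<lambda>v. v@[False]) Q) (u@[False]) = Some (u[i0 := False] @ [True])"
proof -
  have "greedy_next S (P @ map (\<lambda>v. v@[False]) Q) (u@[False]) = Some (swap_pos (u@[False]) i0 M)"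
  proof (rule gn_char[OF assms(4)])
    fix i j assume h: "(i, j) \<in> cands S (P @ map (\<lambda>v. v@[False]) Q) (u@[False])"
    have ht: "hom_trans (u@[False]) i j" using h by (simp add: cands_def)
    have "i \<noteq> M" using ht assms(2) by (auto simp: hom_trans_def nth_append)
    then have "j = M" using cands_cross[OF assms(1-3) h] by simp
    then show "i0 < i \<or> (i = i0 \<and> M \<le> j)" using assms(5) h by simp
  qed
  moreover have "i0 < M" "u ! i0" using assms(4,2) by (auto simp: cands_def hom_trans_def nth_append split: if_splits)
  ultimately show ?thesis using swap_snoc_M2[of i0 u False] assms(2) by simp
qed



definition tpos :: "bool list \<Rightarrow> nat" where
  "tpos e = (LEAST t. \<forall>m. t \<le> m \<and> m < length e \<longrightarrow> \<not> e!m)"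

lemma tpos_ex: "\<forall>m. length e \<le> m \<and> m < length e \<longrightarrow> \<not> e!m" by (auto dest: leD)

lemma tpos_le: "tpos e \<le> length e"
  unfolding tpos_def by (rule Least_le) (rule tpos_ex)

lemma tpos_after: "tpos e \<le> m \<Longrightarrow> m < length e \<Longrightarrow> \<not> e!m"
proof -
  have "\<forall>m. tpos e \<le> m \<and> m < length e \<longrightarrow> \<not> e!m"
    unfolding tpos_def by (rule LeastI[of _ "length e"]) (rule tpos_ex)
  then show "tpos e \<le> m \<Longrightarrow> m < length e \<Longrightarrow> \<not> e!m" by blast
qed

lemma tpos_least: "(\<forall>m. j \<le> m \<and> m < length e \<longrightarrow> \<not> e!m) \<Longrightarrow> tpos e \<le> j"
  unfolding tpos_def by (rule Least_le)

lemma tpos_last: "tpos e > 0 \<Longrightarrow> e!(tpos e - 1)"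
proof (rule ccontr)
  assume h: "tpos e > 0" "\<not> e!(tpos e - 1)"
  have "\<forall>m. tpos e - 1 \<le> m \<and> m < length e \<longrightarrow> \<not> e!m"
  proof (intro allI impI)
    fix m assume "tpos e - 1 \<le> m \<and> m < length e"
    then show "\<not> e!m"
    proof (cases "m = tpos e - 1")
      case True then show ?thesis using h by simp
    next
      case False
      then have "tpos e \<le> m" using \<open>tpos e - 1 \<le> m \<and> m < length e\<close> by linarith
      then show ?thesis using tpos_after[of e m] \<open>tpos e - 1 \<le> m \<and> m < length e\<close> by simp
    qed
  qed
  then have "tpos e \<le> tpos e - 1" by (rule tpos_least)
  then show False using h by simp
qed

lemma tpos_snocT[simp]: "tpos (e@[True]) = Suc (length e)"
proof -
  have "tpos (e@[True]) \<le> Suc (length e)" using tpos_le[of "e@[True]"] by simp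
  moreover have "\<not> tpos (e@[True]) \<le> length e"
  proof
    assume "tpos (e@[True]) \<le> length e"
    then have "\<not> (e@[True])!(length e)" by (rule tpos_after) simp
    then show False by simp
  qed
  ultimately show ?thesis by simp
qed

lemma tpos_snocF[simp]: "tpos (e@[False]) = tpos e"
proof (rule antisym)
  show "tpos (e@[False]) \<le> tpos e"
    by (rule tpos_least) (auto simp: nth_append tpos_after)
  show "tpos e \<le> tpos (e@[False])"
  proof (rule tpos_least, intro allI impI)
    fix m assume "tpos (e@[False]) \<le> m \<and> m < length e"
    then have "\<not> (e@[False])!m" by (intro tpos_after) auto
    then show "\<not> e!m" using \<open>tpos (e@[False]) \<le> m \<and> m < length e\<close> by (simp add: nth_append)
  qed
qed

lemma weight_replicate[simp]: "weight (replicate n b) = (if b then n else 0)"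
  by (induction n) (auto simp: weight_def)
lemma zeros_replicate[simp]: "zeros (replicate n b) = (if b then 0 else n)"
  by (induction n) (auto simp: zeros_def)

lemma weight_0_iff: "weight e = 0 \<longleftrightarrow> (\<forall>m < length e. \<not> e!m)"
  by (auto simp: weight_def filter_empty_conv in_set_conv_nth)

lemma tpos_pos: "weight e > 0 \<Longrightarrow> tpos e > 0"
proof (rule ccontr)
  assume "weight e > 0" "\<not> tpos e > 0"
  then have "\<forall>m < length e. \<not> e!m" using tpos_after[of e] by auto
  then show False using \<open>weight e > 0\<close> weight_0_iff[of e] by simp
qed

lemma tpos_lt: "weight e > 0 \<Longrightarrow> tpos e - 1 < length e"
  using tpos_pos[of e] tpos_le[of e] by linarith

lemma weight_take_tpos: "tpos e \<le> i \<Longrightarrow> weight (take i e) = weight e"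
proof -
  assume h: "tpos e \<le> i"
  have "weight (drop i e) = 0"
    unfolding weight_0_iff using h tpos_after[of e] by auto
  then show ?thesis using append_take_drop_id[of i e] weight_append[of "take i e" "drop i e"] by simp
qed

definition zw :: "nat \<Rightarrow> nat \<Rightarrow> bool list" where
  "zw N K = replicate (N - K) False @ replicate K True"

lemma zw_snocT: "1 \<le> K \<Longrightarrow> K \<le> Suc M \<Longrightarrow> zw (Suc M) K = zw M (K - 1) @ [True]"
proof -
  assume "1 \<le> K" "K \<le> Suc M"
  then obtain K' where K: "K = Suc K'" by (cases K) auto
  then show ?thesis using \<open>K \<le> Suc M\<close> by (simp add: zw_def replicate_append_same)
qed

lemma zw_0: "zw N 0 = replicate N False" by (simp add: zw_def)

lemma zw_snocF0: "zw (Suc M) 0 = zw M 0 @ [False]"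
  by (simp add: zw_def replicate_append_same)

lemma length_zw[simp]: "K \<le> N \<Longrightarrow> length (zw N K) = N" by (simp add: zw_def)

lemma C_zero: "C N p 0 = {replicate N False}"
proof -
  have "w \<in> C N p 0 \<longleftrightarrow> w = replicate N False" for w
  proof
    assume "w \<in> C N p 0"
    then have "length w = N" "weight w = 0" by (auto simp: C_def)
    then show "w = replicate N False" using weight_0_iff[of w]
      by (metis (full_types) in_set_conv_nth replicate_length_same)
  next
    assume w: "w = replicate N False"
    have "weight (take i w) = 0" for i using w by (simp add: weight_0_iff)
    then show "w \<in> C N p 0" using w by (auto simp: C_def)
  qed
  then show ?thesis by auto
qed

lemma zw_C: "(p+1)*K \<le> N \<Longrightarrow> zw N K \<in> C N p K"
proof (induction N arbitrary: K)
  case 0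
  then have "K = 0" by simp
  then show ?case using C_zero by (simp add: zw_def)
next
  case (Suc M)
  show ?case
  proof (cases K)
    case 0
    then show ?thesis using C_zero by (simp add: zw_def)
  next
    case (Suc K')
    have "(p+1)*K' \<le> M" using Suc.prems Suc by simp
    then have "zw M K' \<in> C M p K'" by (rule Suc.IH)
    moreover have "zw (Suc M) K = zw M K' @ [True]" using zw_snocT[of K M] Suc Suc.prems by simp
    ultimately show ?thesis using C_snoc Suc Suc.prems by simp
  qed
qed

lemma zeros_update:
  "i < length xs \<Longrightarrow> zeros (xs[i := x]) + (if xs!i then 0 else 1) = zeros xs + (if x then 0 else 1)"
  using weight_update[of i xs x] zeros_weight[of xs] zeros_weight[of "xs[i:=x]"]
  by (cases x; cases "xs!i") auto

lemma counts_lower: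
  assumes "k < length xs" "xs!k"
  shows "weight (take i (xs[k := False])) \<le> weight (take i xs)"
    "zeros (take i (xs[k := False])) \<ge> zeros (take i xs)"
proof -
  have t: "take i (xs[k := False]) = (take i xs)[k := False]" by (rule take_update_swap)
  show "weight (take i (xs[k := False])) \<le> weight (take i xs)"
  proof (cases "k < length (take i xs)")
    case True
    then show ?thesis using weight_update[OF True, of False] t by simp
  next
    case False
    then have "(take i xs)[k := False] = take i xs" by (intro list_update_beyond) linarith
    then show ?thesis using t by simp
  qed
  show "zeros (take i (xs[k := False])) \<ge> zeros (take i xs)"
  proof (cases "k < length (take i xs)")
    case True
    then have "(take i xs) ! k" using assms by simp
    then show ?thesis using zeros_update[OF True, of False] t by simp
  next
    case False
    then have "(take i xs)[k := False] = take i xs" by (intro list_update_beyond) linarith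
    then show ?thesis using t by simp
  qed
qed

lemma C_lower:
  assumes "e \<in> C M p K" "k < M" "e!k"
  shows "e[k := False] \<in> C M p (K - 1)"
proof -
  have le: "length e = M" using assms by (simp add: C_def)
  have "weight (e[k := False]) + 1 = K" using weight_update[of k e False] assms le by (simp add: C_def)
  moreover have "zeros (take i (e[k := False])) \<ge> p * weight (take i (e[k := False]))" if "i \<le> M" for i
  proof -
    have "zeros (take i e) \<ge> p * weight (take i e)" using assms that by (simp add: C_def)
    moreover have "p * weight (take i (e[k := False])) \<le> p * weight (take i e)"
      using counts_lower(1)[of k e i] assms le by simp
    ultimately show ?thesis using counts_lower(2)[of k e i] assms le by linarith
  qed
  ultimately show ?thesis using le by (auto simp: C_def)
qed

definition rl :: "bool list \<Rightarrow> bool list" where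
  "rl e = e[tpos e - 1 := False]"

lemma rl_C: "e \<in> C M p K \<Longrightarrow> K \<ge> 1 \<Longrightarrow> rl e \<in> C M p (K - 1)"
proof -
  assume h: "e \<in> C M p K" "K \<ge> 1"
  then have w: "weight e > 0" "length e = M" by (auto simp: C_def)
  show ?thesis unfolding rl_def
    using C_lower[OF h(1) _ tpos_last[OF tpos_pos[OF w(1)]]] tpos_lt[OF w(1)] w(2) by simp
qed

lemma rl_snocT: "rl (e@[True]) = e @ [False]"
  by (simp add: rl_def)

lemma rl_snocF: "weight e > 0 \<Longrightarrow> rl (e@[False]) = rl e @ [False]"
  using tpos_lt[of e] by (simp add: rl_def list_update_append)

definition ins :: "nat \<Rightarrow> nat \<Rightarrow> bool list \<Rightarrow> bool list" where
  "ins p K e = e[max (tpos e) ((p+1)*K - 1) := True]"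

lemma ins_C:
  assumes "e \<in> C M p (K - 1)" "K \<ge> 1" "tpos e \<le> q" "q < M" "(p+1)*K \<le> Suc q"
  shows "e[q := True] \<in> C M p K"
proof -
  have le: "length e = M" and we: "weight e = K - 1" using assms by (auto simp: C_def)
  have nq: "\<not> e!q" using tpos_after assms le by simp
  have "weight (e[q := True]) = K" using weight_update[of q e True] assms le nq we by simp
  moreover have "zeros (take i (e[q := True])) \<ge> p * weight (take i (e[q := True]))" if "i \<le> M" for i
  proof (cases "i \<le> q")
    case True
    then show ?thesis using assms that by (simp add: C_def)
  next
    case False
    have t: "take i (e[q := True]) = (take i e)[q := True]" by (rule take_update_swap)
    have qi: "q < length (take i e)" using False that le by simp
    have "weight (take i e) = K - 1" using weight_take_tpos[of e i] assms False we by simp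
    then have w1: "weight (take i (e[q := True])) = K"
      using weight_update[OF qi, of True] t nq qi assms by simp
    have "zeros (take i (e[q := True])) + K = i"
      using zeros_weight[of "take i (e[q := True])"] w1 that le by simp
    then show ?thesis using w1 False assms by (simp add: algebra_simps) 
  qed
  ultimately show ?thesis using le by (auto simp: C_def)
qed

lemma ins_C_conv:
  assumes "e \<in> C M p (K - 1)" "K \<ge> 1" "tpos e \<le> q" "q < M" "e[q := True] \<in> C M p K"
  shows "(p+1)*K \<le> Suc q"
proof -
  have le: "length e = M" and we: "weight e = K - 1" using assms by (auto simp: C_def)
  have nq: "\<not> e!q" using tpos_after assms le by simp
  have t: "take (Suc q) (e[q := True]) = (take (Suc q) e)[q := True]" by (rule take_update_swap)
  have qi: "q < length (take (Suc q) e)" using assms le by simp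
  have "weight (take (Suc q) e) = K - 1" using weight_take_tpos[of e "Suc q"] assms we by simp
  then have w1: "weight (take (Suc q) (e[q := True])) = K"
    using weight_update[OF qi, of True] t nq qi assms by simp
  have "zeros (take (Suc q) (e[q := True])) + K = Suc q"
    using zeros_weight[of "take (Suc q) (e[q := True])"] w1 assms le by simp
  moreover have "zeros (take (Suc q) (e[q := True])) \<ge> p * weight (take (Suc q) (e[q := True]))"
    using assms by (simp add: C_def)
  ultimately show ?thesis using w1 by (simp add: algebra_simps)
qed



fun Ef :: "nat \<Rightarrow> nat \<Rightarrow> nat \<Rightarrow> bool list" where
  "Ef p 0 J = []"
| "Ef p (Suc M) J = (if J = 0 then replicate (Suc M) False
     else if M < (p+1)*J then Ef p M (J-1) @ [True]
     else if ins p J (Ef p M (J-1)) \<noteq> zw M J then zw M J @ [False]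
     else Ef p M J @ [False])"

inductive Gw :: "nat \<Rightarrow> nat \<Rightarrow> nat \<Rightarrow> bool list \<Rightarrow> bool" for p where
  G1: "(p+1)*K \<le> N \<Longrightarrow> Gw p N K (zw N K)"
| G2: "Gw p N K g \<Longrightarrow> Gw p (Suc N) K (g @ [False])"
| G3: "Gw p N (K-1) g \<Longrightarrow> K \<ge> 1 \<Longrightarrow> N < (p+1)*K \<Longrightarrow> (p+1)*K \<le> Suc N \<Longrightarrow> Gw p (Suc N) K (g @ [True])"

lemma Gw_C: "Gw p N K g \<Longrightarrow> g \<in> C N p K"
proof (induction rule: Gw.induct)
  case (G1 K N) then show ?case by (rule zw_C)
next
  case (G2 N K g) then show ?case using C_snoc by simp
next
  case (G3 N K g) then show ?case using C_snoc by simp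
qed

lemma snoc_ex: "length w = Suc M \<Longrightarrow> \<exists>u b. w = u @ [b] \<and> length u = M"
  by (cases w rule: rev_exhaust) auto

lemma C1_G: "w \<in> C N p 1 \<Longrightarrow> Gw p N 1 w"
proof (induction N arbitrary: w)
  case 0 then show ?case by (auto simp: C_def)
next
  case (Suc M)
  obtain u b where w: "w = u @ [b]" using snoc_ex[of w M] Suc.prems by (auto simp: C_def)
  show ?case
  proof (cases b)
    case True
    then have "u \<in> C M p 0" "p + 1 \<le> Suc M" using Suc.prems w C_snoc by auto
    then have "u = zw M 0" using C_zero zw_0 by simp
    then have "w = zw (Suc M) 1" using w True zw_snocT[of 1 M] by simp
    then show ?thesis using G1[of p 1 "Suc M"] \<open>p + 1 \<le> Suc M\<close> by simp
  next
    case False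
    then have "u \<in> C M p 1" using Suc.prems w C_snoc by auto
    then show ?thesis using Suc.IH w False G2 by simp
  qed
qed

lemma Gw_inv:
  assumes "Gw p (Suc M) K (u @ [b])"
  shows "u @ [b] = zw (Suc M) K \<or> (\<not> b \<and> Gw p M K u) \<or> (b \<and> Gw p M (K-1) u \<and> K \<ge> 1 \<and> M < (p+1)*K)"
  using assms by (cases rule: Gw.cases) auto

lemma Ef_props:
  "(p+1)*J \<le> M \<Longrightarrow> Ef p M J \<in> C M p J \<and> Gw p M J (Ef p M J) \<and>
     ((p+1)*(J+1) \<le> M \<longrightarrow> tpos (Ef p M J) < M \<and> Gw p M (J+1) (ins p (J+1) (Ef p M J))) \<and>
     (J \<ge> 1 \<longrightarrow> Gw p M (J-1) (rl (Ef p M J)))"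
proof (induction M arbitrary: J)
  case 0
  then have "J = 0" by simp
  then show ?case using G1[of p 0 0] zw_C[of p 0 0] by (simp add: zw_def)
next
  case (Suc M)
  show ?case
  proof (cases "J = 0")
    case True
    have e: "Ef p (Suc M) J = zw (Suc M) 0" using True by (simp add: zw_0)
    have P1: "tpos (Ef p (Suc M) J) < Suc M \<and> Gw p (Suc M) (J+1) (ins p (J+1) (Ef p (Suc M) J))"
      if h: "(p+1)*(J+1) \<le> Suc M"
    proof -
      have t0: "tpos (replicate (Suc M) False) = 0"
        using tpos_least[of 0 "replicate (Suc M) False"] by (simp del: replicate_Suc)
      have "ins p 1 (replicate (Suc M) False) = (replicate (Suc M) False)[p := True]"
        using t0 by (simp add: ins_def)
      moreover have "(replicate (Suc M) False)[p := True] \<in> C (Suc M) p 1"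
        using ins_C[of "replicate (Suc M) False" "Suc M" p 1 p] t0 h True C_zero by simp
      ultimately show ?thesis using C1_G t0 True by simp
    qed
    show ?thesis using e P1 True G1[of p 0 "Suc M"] zw_C[of p 0 "Suc M"] by simp
  next
    case J: False
    show ?thesis
    proof (cases "M < (p+1)*J")
      case tight: True
      have e: "Ef p (Suc M) J = Ef p M (J-1) @ [True]" using J tight by simp
      have "(p+1)*(J-1) \<le> M" using Suc.prems J by (simp add: algebra_simps diff_mult_distrib2)
      note IH = Suc.IH[OF this]
      have C: "Ef p (Suc M) J \<in> C (Suc M) p J" using e IH C_snoc J Suc.prems by simp
      have G: "Gw p (Suc M) J (Ef p (Suc M) J)" using e IH G3[of p M J] J tight Suc.prems by simp
      have P2: "Gw p (Suc M) (J-1) (rl (Ef p (Suc M) J))" using e rl_snocT IH G2 by simp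
      have "\<not> (p+1)*(J+1) \<le> Suc M" using tight by (simp add: algebra_simps)
      then show ?thesis using C G P2 by blast
    next
      case nt: False
      show ?thesis
      proof (cases "ins p J (Ef p M (J-1)) \<noteq> zw M J")
        case A: True
        have e: "Ef p (Suc M) J = zw M J @ [False]" using J nt A by simp
        have zC: "zw M J \<in> C M p J" using nt by (intro zw_C) simp
        have C: "Ef p (Suc M) J \<in> C (Suc M) p J" using e zC C_snoc by simp
        have G: "Gw p (Suc M) J (Ef p (Suc M) J)" using e G1[of p J M] G2 nt by simp
        have "J \<le> (p+1)*J" by simp
        then have JM: "J \<le> M" using nt by linarith
        have tz: "tpos (zw M J) = M"
        proof -
          obtain J' where "J = Suc J'" using J by (cases J) auto
          then have M1: "M = Suc (M - 1)" using JM by simp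
          then have z: "zw M J = zw (M-1) J' @ [True]" using JM zw_snocT[of J "M-1"] \<open>J = Suc J'\<close> by simp
          have "J' \<le> M - 1" using JM \<open>J = Suc J'\<close> by simp
          then have "length (zw (M-1) J') = M - 1" by simp
          then show ?thesis using z M1 by simp
        qed
        have P1: "tpos (Ef p (Suc M) J) < Suc M \<and> Gw p (Suc M) (J+1) (ins p (J+1) (Ef p (Suc M) J))"
          if h: "(p+1)*(J+1) \<le> Suc M"
        proof -
          have mx: "max (tpos (zw M J @ [False])) ((p+1)*(J+1) - 1) = M" using tz h by simp
          have "ins p (J+1) (zw M J @ [False]) = zw M J @ [True]"
            unfolding ins_def mx using JM by (simp add: list_update_append)
          also have "\<dots> = zw (Suc M) (J+1)" using zw_snocT[of "J+1" M] JM by simp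
          finally show ?thesis using e tz G1[OF h] by simp
        qed
        have P2: "Gw p (Suc M) (J-1) (rl (Ef p (Suc M) J))"
        proof -
          obtain J' where J': "J = Suc J'" using J by (cases J) auto
          obtain M' where M': "M = Suc M'" using JM J by (cases M) auto
          have z: "zw M J = zw M' J' @ [True]" using zw_snocT[of J M'] J' M' JM by simp
          have w: "weight (zw M J) > 0" using J JM by (simp add: zw_def)
          have "rl (Ef p (Suc M) J) = zw M' J' @ [False, False]"
            using e rl_snocF[OF w] z rl_snocT by simp
          moreover have "(p+1)*J' \<le> M'" using nt J' M' by simp
          moreover have "Gw p (Suc (Suc M')) J' ((zw M' J' @ [False]) @ [False])"
            using G1[of p J' M'] \<open>(p+1)*J' \<le> M'\<close> by (intro G2)
          ultimately show ?thesis using J' M' by simp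
        qed
        show ?thesis using C G P1 P2 by blast
      next
        case B: False
        have e: "Ef p (Suc M) J = Ef p M J @ [False]" using J nt B by simp
        have "(p+1)*J \<le> M" using nt by simp
        note IH = Suc.IH[OF this]
        have C: "Ef p (Suc M) J \<in> C (Suc M) p J" using e IH C_snoc by simp
        have G: "Gw p (Suc M) J (Ef p (Suc M) J)" using e IH G2 by simp
        have we: "weight (Ef p M J) > 0" using IH J by (simp add: C_def)
        have lE: "length (Ef p M J) = M" using IH by (simp add: C_def)
        have P2: "Gw p (Suc M) (J-1) (rl (Ef p (Suc M) J))"
          using e rl_snocF[OF we] IH G2 J by simp
        have P1: "tpos (Ef p (Suc M) J) < Suc M \<and> Gw p (Suc M) (J+1) (ins p (J+1) (Ef p (Suc M) J))"
          if h: "(p+1)*(J+1) \<le> Suc M"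
        proof -
          let ?e = "Ef p M J"
          have t1: "tpos (?e @ [False]) < Suc M" using tpos_le[of ?e] lE by simp
          show ?thesis
          proof (cases "(p+1)*(J+1) \<le> M")
            case True
            then have h2: "tpos ?e < M" "Gw p M (J+1) (ins p (J+1) ?e)" using IH by auto
            have "max (tpos ?e) ((p+1)*(J+1) - 1) < M" using h2 True by simp
            then have "ins p (J+1) (?e @ [False]) = ins p (J+1) ?e @ [False]"
              using lE by (simp add: ins_def list_update_append)
            then show ?thesis using e t1 h2 G2 by simp
          next
            case False
            then have eq: "(p+1)*(J+1) = Suc M" using h by simp
            have mx: "max (tpos ?e) ((p+1)*(J+1) - 1) = M" using eq tpos_le[of ?e] lE by simp
            have "ins p (J+1) (?e @ [False]) = ?e @ [True]"
              unfolding ins_def using mx lE by (simp add: list_update_append)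
            moreover have "Gw p (Suc M) (J+1) (?e @ [True])"
              using G3[of p M "J+1" ?e] IH eq by simp
            ultimately show ?thesis using e t1 by simp
          qed
        qed
        show ?thesis using C G P1 P2 by blast
      qed
    qed
  qed
qed



lemma sp_single: "suffix_partitioned [x]"
  by (auto simp: suffix_partitioned_def)

lemma sp_map:
  assumes "suffix_partitioned R"
  shows "suffix_partitioned (map (\<lambda>v. v @ [c]) R)"
  unfolding suffix_partitioned_def
proof (intro allI impI)
  fix s a b d
  assume h: "a \<le> b \<and> b \<le> d \<and> d < length (map (\<lambda>v. v @ [c]) R) \<and>
    suffix s (map (\<lambda>v. v @ [c]) R ! a) \<and> suffix s (map (\<lambda>v. v @ [c]) R ! d)"
  then have lt: "a < length R" "b < length R" "d < length R" by auto
  have ha: "suffix s (R!a @ [c])" using h lt by simp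
  have hd: "suffix s (R!d @ [c])" using h lt by simp
  show "suffix s (map (\<lambda>v. v @ [c]) R ! b)"
  proof (cases "s = []")
    case True then show ?thesis by simp
  next
    case False
    then obtain zs where s: "s = zs @ [c]" "suffix zs (R!a)" using ha suffix_snoc[of s "R!a" c] by blast
    then have "suffix zs (R!d)" using hd by simp
    then have "suffix zs (R!b)" using assms s h lt unfolding suffix_partitioned_def by blast
    then show ?thesis using s lt by simp
  qed
qed

lemma sp_append:
  assumes "suffix_partitioned Y" "suffix_partitioned Z"
    "\<And>s y z. y \<in> set Y \<Longrightarrow> z \<in> set Z \<Longrightarrow> suffix s y \<Longrightarrow> suffix s z \<Longrightarrow> s = []"
  shows "suffix_partitioned (Y @ Z)"
  unfolding suffix_partitioned_def
proof (intro allI impI)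
  fix s a b d
  assume h: "a \<le> b \<and> b \<le> d \<and> d < length (Y @ Z) \<and> suffix s ((Y @ Z) ! a) \<and> suffix s ((Y @ Z) ! d)"
  then have o: "a \<le> b" "b \<le> d" "d < length Y + length Z" and sa: "suffix s ((Y @ Z) ! a)"
    and sd: "suffix s ((Y @ Z) ! d)" by auto
  show "suffix s ((Y @ Z) ! b)"
  proof (cases "d < length Y")
    case True
    then have "a < length Y" "b < length Y" using o by auto
    then have "suffix s (Y ! a)" "suffix s (Y ! d)" using sa sd True by (simp_all add: nth_append)
    then have "suffix s (Y ! b)" using assms(1) o True unfolding suffix_partitioned_def by blast
    then show ?thesis using \<open>b < length Y\<close> by (simp add: nth_append)
  next
    case dY: False
    show ?thesis
    proof (cases "a < length Y")
      case True
      have "Y ! a \<in> set Y" using True by simp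
      moreover have "Z ! (d - length Y) \<in> set Z" using dY o by simp
      moreover have "suffix s (Y ! a)" using sa True by (simp add: nth_append)
      moreover have "suffix s (Z ! (d - length Y))" using sd dY by (simp add: nth_append)
      ultimately have "s = []" using assms(3) by blast
      then show ?thesis by simp
    next
      case False
      have "suffix s (Z ! (a - length Y))" using sa False by (simp add: nth_append)
      moreover have "suffix s (Z ! (d - length Y))" using sd dY by (simp add: nth_append)
      moreover have "a - length Y \<le> b - length Y" "b - length Y \<le> d - length Y" "d - length Y < length Z"
        using o False dY by auto
      ultimately have "suffix s (Z ! (b - length Y))"
        using assms(2) unfolding suffix_partitioned_def by blast
      moreover have "\<not> b < length Y" using o False by simp
      ultimately show ?thesis by (simp add: nth_append)
    qed
  qed
qed

lemma sp_two:
  assumes "suffix_partitioned R1" "suffix_partitioned R2" "c \<noteq> d"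
  shows "suffix_partitioned (map (\<lambda>v. v @ [c]) R1 @ map (\<lambda>v. v @ [d]) R2)"
proof (rule sp_append[OF sp_map[OF assms(1)] sp_map[OF assms(2)]])
  fix s y z
  assume "y \<in> set (map (\<lambda>v. v @ [c]) R1)" "z \<in> set (map (\<lambda>v. v @ [d]) R2)" "suffix s y" "suffix s z"
  then obtain y' z' where "y = y' @ [c]" "z = z' @ [d]" "suffix s (y' @ [c])" "suffix s (z' @ [d])" by auto
  then show "s = []" using assms(3) suffix_snoc[of s y' c] suffix_snoc[of s z' d] by auto
qed



lemma ht_T1:
  assumes "length e = M"
  shows "hom_trans (e@[True]) M j \<longleftrightarrow> (j < M \<and> tpos e \<le> j)"
proof
  assume h: "hom_trans (e@[True]) M j"
  then have j: "j < M" "\<not> e!j" using assms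
    by (auto simp: hom_trans_def nth_append split: if_splits)
  have "\<forall>m. j < m \<and> m < M \<longrightarrow> \<not> e!m"
  proof (intro allI impI)
    fix m assume m: "j < m \<and> m < M"
    then have "\<not> (e@[True])!m" using h j by (auto simp: hom_trans_def)
    then show "\<not> e!m" using m assms by (simp add: nth_append)
  qed
  then have "\<forall>m. j \<le> m \<and> m < length e \<longrightarrow> \<not> e!m"
  proof (intro allI impI)
    fix m assume m: "j \<le> m \<and> m < length e" and hh: "\<forall>m. j < m \<and> m < M \<longrightarrow> \<not> e!m"
    show "\<not> e!m"
    proof (cases "m = j")
      case True then show ?thesis using j by simp
    next
      case False then show ?thesis using hh m assms by simp
    qed
  qed
  then show "j < M \<and> tpos e \<le> j" using tpos_least j by blast
next
  assume h: "j < M \<and> tpos e \<le> j"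
  have "\<forall>m. min M j < m \<and> m < max M j \<longrightarrow> \<not> (e@[True])!m"
    using h assms tpos_after[of e] by (auto simp: nth_append)
  then show "hom_trans (e@[True]) M j" using h assms tpos_after[of e j]
    by (auto simp: hom_trans_def nth_append)
qed

lemma ht_T2:
  assumes "length e = M" "weight e > 0"
  shows "hom_trans (e@[False]) i M \<longleftrightarrow> i = tpos e - 1"
proof
  assume h: "hom_trans (e@[False]) i M"
  then have i: "i < M" "e!i" using assms
    by (auto simp: hom_trans_def nth_append split: if_splits)
  have "\<forall>m. i < m \<and> m < M \<longrightarrow> \<not> e!m"
  proof (intro allI impI)
    fix m assume m: "i < m \<and> m < M"
    then have "\<not> (e@[False])!m" using h i by (auto simp: hom_trans_def)
    then show "\<not> e!m" using m assms by (simp add: nth_append)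
  qed
  then have "\<forall>m. Suc i \<le> m \<and> m < length e \<longrightarrow> \<not> e!m" using assms by auto
  then have "tpos e \<le> Suc i" using tpos_least by blast
  moreover have "\<not> tpos e \<le> i" using tpos_after[of e i] i assms by auto
  ultimately show "i = tpos e - 1" by simp
next
  assume h: "i = tpos e - 1"
  have tp: "tpos e > 0" using tpos_pos assms by simp
  have "tpos e \<le> length e" by (rule tpos_le)
  then have "i < M" using h tp assms by simp
  moreover have "e!i" using h tpos_last[OF tp] by simp
  moreover have "\<forall>m. i < m \<and> m < M \<longrightarrow> \<not> e!m" using h tp tpos_after[of e] assms by auto
  ultimately show "hom_trans (e@[False]) i M" using assms
    by (auto simp: hom_trans_def nth_append)
qed

lemma T1_cands:
  assumes e: "e \<in> C M p (K - 1)" and K: "K \<ge> 1" and t: "tpos e < M" and b: "(p+1)*K \<le> M"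
  defines "q \<equiv> max (tpos e) ((p+1)*K - 1)"
  shows "(M, q) \<in> cands (C (Suc M) p K) (map (\<lambda>v. v@[True]) Q) (e@[True])"
    "\<And>j. (M, j) \<in> cands (C (Suc M) p K) (map (\<lambda>v. v@[True]) Q) (e@[True]) \<Longrightarrow> q \<le> j"
proof -
  have le: "length e = M" using e by (simp add: C_def)
  have qM: "q < M" using t b K unfolding q_def by (simp add: algebra_simps)
  have sw: "swap_pos (e@[True]) M j = e[j := True] @ [False]" if "j < M" "tpos e \<le> j" for j
    using swap_snoc_M1[of j e True] that le tpos_after[of e j] by simp
  have "e[q := True] \<in> C M p K"
    using ins_C[OF e K _ qM] unfolding q_def by (simp add: algebra_simps)
  then show "(M, q) \<in> cands (C (Suc M) p K) (map (\<lambda>v. v@[True]) Q) (e@[True])"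
    using ht_T1[OF le, of q] qM sw[of q] C_snoc[of "e[q:=True]" False M p K] unfolding q_def
    by (auto simp: cands_def)
  fix j assume "(M, j) \<in> cands (C (Suc M) p K) (map (\<lambda>v. v@[True]) Q) (e@[True])"
  then have j: "j < M" "tpos e \<le> j" "e[j := True] @ [False] \<in> C (Suc M) p K"
    using ht_T1[OF le, of j] sw[of j] by (auto simp: cands_def)
  then have "e[j := True] \<in> C M p K" using C_snoc by simp
  then have "(p+1)*K \<le> Suc j" using ins_C_conv[OF e K j(2) j(1)] by simp
  then show "q \<le> j" using j unfolding q_def by simp
qed

lemma T2_cands:
  assumes e: "e \<in> C M p K" and K: "K \<ge> 1"
  shows "(tpos e - 1, M) \<in> cands (C (Suc M) p K) (map (\<lambda>v. v@[False]) Q) (e@[False])"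
    "\<And>i. (i, M) \<in> cands (C (Suc M) p K) (map (\<lambda>v. v@[False]) Q) (e@[False]) \<Longrightarrow> i = tpos e - 1"
proof -
  have le: "length e = M" and w: "weight e > 0" using e K by (auto simp: C_def)
  have tl: "tpos e - 1 < M" using tpos_lt[OF w] le by simp
  have sw: "swap_pos (e@[False]) (tpos e - 1) M = rl e @ [True]"
    using swap_snoc_M2[of "tpos e - 1" e False] tl le tpos_last[OF tpos_pos[OF w]] by (simp add: rl_def)
  have "rl e \<in> C M p (K - 1)" using rl_C e K by simp
  moreover have "(p+1)*K \<le> Suc M" using C_bound[OF e] by simp
  ultimately have "rl e @ [True] \<in> C (Suc M) p K" using C_snoc K by simp
  then show "(tpos e - 1, M) \<in> cands (C (Suc M) p K) (map (\<lambda>v. v@[False]) Q) (e@[False])"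
    using ht_T2[OF le w] sw by (auto simp: cands_def)
  fix i assume "(i, M) \<in> cands (C (Suc M) p K) (map (\<lambda>v. v@[False]) Q) (e@[False])"
  then show "i = tpos e - 1" using ht_T2[OF le w] by (auto simp: cands_def)
qed

lemma rl_ne_zw:
  assumes "e \<in> C M p K" "K \<ge> 2"
  shows "rl e \<noteq> zw M (K - 1)"
proof
  assume eq: "rl e = zw M (K - 1)"
  have le: "length e = M" and w: "weight e > 0" using assms by (auto simp: C_def)
  have "K \<le> (p+1)*K" by simp
  then have KM: "K \<le> M" using C_bound[OF assms(1)] by linarith
  obtain M' where M': "M = Suc M'" using KM assms(2) by (cases M) auto
  have z: "zw M (K-1) = zw M' (K-1-1) @ [True]" using zw_snocT[of "K-1" M'] M' KM assms(2) by simp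
  have "length (zw M' (K-1-1)) = M'" using KM assms(2) M' by simp
  then have "(zw M' (K-1-1) @ [True]) ! M'" by (metis nth_append_length)
  then have "zw M (K-1) ! (M-1)" using z M' by simp
  then have r: "rl e ! (M - 1)" using eq by simp
  have tp: "0 < tpos e" "tpos e \<le> M" using tpos_pos[OF w] tpos_le[of e] le by auto
  show False
  proof (cases "tpos e - 1 = M - 1")
    case True
    then show False using r le tp by (simp add: rl_def)
  next
    case False
    then have "tpos e \<le> M - 1" using tp by linarith
    then have "\<not> e!(M-1)" using tpos_after[of e "M-1"] le KM assms(2) by simp
    then show False using r False by (simp add: rl_def)
  qed
qed



lemma K0_run: "\<alpha> \<in> C N p 0 \<Longrightarrow> gcomp (C N p 0) [\<alpha>] [\<alpha>]"
proof -
  assume "\<alpha> \<in> C N p 0"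
  then have a: "\<alpha> = replicate N False" using C_zero by auto
  have "cands (C N p 0) [\<alpha>] \<alpha> = {}" using a by (auto simp: cands_def hom_trans_def)
  then show ?thesis by (intro stop) (simp add: gn_None_iff)
qed

lemma Ef_0: "Ef p N 0 = zw N 0"
  by (cases N) (simp_all add: zw_0)

lemma stuck: "gcomp S Q R \<Longrightarrow> cands S R (last R) = {}"
  using comp_props(2) gn_None_iff by blast

lemma gcomp_ne: "gcomp S Q R \<Longrightarrow> Q \<noteq> [] \<Longrightarrow> R \<noteq> []"
  using comp_props(1) by blast

lemma set_decomp:
  assumes "(p+1)*K \<le> Suc M" "K \<ge> 1"
  shows "C (Suc M) p K = (\<lambda>v. v@[True]) ` C M p (K-1) \<union> (\<lambda>v. v@[False]) ` C M p K"
proof (rule set_eqI)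
  fix w
  show "w \<in> C (Suc M) p K \<longleftrightarrow> w \<in> (\<lambda>v. v@[True]) ` C M p (K-1) \<union> (\<lambda>v. v@[False]) ` C M p K"
  proof
    assume h: "w \<in> C (Suc M) p K"
    then obtain u b where w: "w = u @ [b]" using snoc_ex[of w M] by (auto simp: C_def)
    then show "w \<in> (\<lambda>v. v@[True]) ` C M p (K-1) \<union> (\<lambda>v. v@[False]) ` C M p K"
      using h C_snoc[of u b M p K] by (cases b) auto
  next
    assume "w \<in> (\<lambda>v. v@[True]) ` C M p (K-1) \<union> (\<lambda>v. v@[False]) ` C M p K"
    then show "w \<in> C (Suc M) p K" using C_snoc assms by auto
  qed
qed

lemma main:
  "\<alpha> \<in> C N p K \<Longrightarrow> \<exists>R. gcomp (C N p K) [\<alpha>] R \<and> suffix_partitioned R \<and>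
     ((\<alpha> \<noteq> zw N K \<or> K = 0) \<longrightarrow> last R = zw N K) \<and>
     (\<alpha> = zw N K \<longrightarrow> last R = Ef p N K) \<and>
     (Gw p N K \<alpha> \<longrightarrow> set R = C N p K)"
proof (induction N arbitrary: K \<alpha>)
  case 0
  then have K: "K = 0" by (auto simp: C_def)
  then have a: "\<alpha> = zw 0 0" using 0 C_zero zw_0 by auto
  show ?case using K0_run[of \<alpha> 0 p] 0 K a sp_single[of \<alpha>] C_zero by (intro exI[of _ "[\<alpha>]"]) auto
next
  case (Suc M)
  show ?case
  proof (cases "K = 0")
    case True
    then have a: "\<alpha> = zw (Suc M) 0" using Suc.prems C_zero zw_0 by auto
    show ?thesis using K0_run[of \<alpha> "Suc M" p] Suc.prems True a sp_single[of \<alpha>] C_zero Ef_0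
      by (intro exI[of _ "[\<alpha>]"]) auto
  next
    case Knz: False
    then have K1: "K \<ge> 1" by simp
    obtain K' where K': "K = Suc K'" using Knz by (cases K) auto
    let ?S = "C (Suc M) p K"
    let ?A1 = "C M p (K-1)"
    let ?A0 = "C M p K"
    have bnd: "(p+1)*K \<le> Suc M" using C_bound[OF Suc.prems] .
    have c1: "{v. v@[True] \<in> ?S} = ?A1" using C_snoc bnd K1 by auto
    have c0: "{v. v@[False] \<in> ?S} = ?A0" using C_snoc by auto
    have l1: "\<forall>u\<in>{v. v@[True] \<in> ?S}. length u = M" using c1 by (auto simp: C_def)
    have l0: "\<forall>u\<in>{v. v@[False] \<in> ?S}. length u = M" using c0 by (auto simp: C_def)
    have dec: "?S = (\<lambda>v. v@[True]) ` ?A1 \<union> (\<lambda>v. v@[False]) ` ?A0" using set_decomp bnd K1 by simp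
    have nc1: "nocls True []" "nocls False []" by (simp_all add: nocls_def)
    have nm1: "nocls False (map (\<lambda>v. v@[True]) X)" for X by (auto simp: nocls_def)
    have nm0: "nocls True (map (\<lambda>v. v@[False]) X)" for X by (auto simp: nocls_def)
    obtain u b where ab: "\<alpha> = u @ [b]" using snoc_ex[of \<alpha> M] Suc.prems by (auto simp: C_def)
    have "K \<le> (p+1)*K" by simp
    then have KM: "K \<le> Suc M" using bnd by linarith
    have zS: "zw (Suc M) K = zw M (K-1) @ [True]" using zw_snocT[of K M] K1 KM by simp
    show ?thesis
    proof (cases b)
      case bT: True
      have uA1: "u \<in> ?A1" using Suc.prems ab bT C_snoc by simp
      show ?thesis
      proof (cases "u = zw M (K-1)")
        case uz: False
        obtain R1 where R1: "gcomp ?A1 [u] R1" "suffix_partitioned R1" "last R1 = zw M (K-1)"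
          "Gw p M (K-1) u \<longrightarrow> set R1 = ?A1"
          using Suc.IH[OF uA1] uz by blast
        have K2: "K \<ge> 2"
        proof (rule ccontr)
          assume "\<not> K \<ge> 2"
          then have "K = 1" using K1 by simp
          then have "u = zw M (K-1)" using uA1 C_zero zw_0 by auto
          then show False using uz by simp
        qed
        have g1: "gcomp {v. v@[True] \<in> ?S} [u] R1" using R1(1) c1 by simp
        have ne1: "R1 \<noteq> []" using gcomp_ne[OF R1(1)] by simp
        have M1: "M \<ge> 1" using K2 KM by linarith
        have lz: "length (last R1) = M" using R1(3) KM by simp
        have "last R1 ! (M - 1)"
        proof -
          obtain M' where M': "M = Suc M'" using M1 by (cases M) auto
          have z: "zw M (K-1) = zw M' (K-1-1) @ [True]" using zw_snocT[of "K-1" M'] M' K2 KM by simp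
          have "length (zw M' (K-1-1)) = M'" using z lz R1(3) M' by simp
          then have "(zw M' (K-1-1) @ [True]) ! M'" by (metis nth_append_length)
          then show ?thesis using z M' R1(3) by simp
        qed
        then have stop1: "greedy_next ?S ([] @ map (\<lambda>v. v@[True]) R1) (last R1 @ [True]) = None"
          by (intro exit_z[OF stuck[OF g1] lz nc1(1) M1])
        have "gcomp ?S (map (\<lambda>v. v@[True]) R1) (map (\<lambda>v. v@[True]) R1)"
          using stop1 ne1 by (intro stop) (simp add: last_map)
        then have gc: "gcomp ?S ([] @ map (\<lambda>v. v@[True]) [u]) (map (\<lambda>v. v@[True]) R1)"
          using block[OF g1 refl l1 nc1(1), of "map (\<lambda>v. v@[True]) R1"] uA1 c1 by simp
        have last: "last (map (\<lambda>v. v@[True]) R1) = zw (Suc M) K" using ne1 R1(3) zS by (simp add: last_map)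
        have notz: "\<alpha> \<noteq> zw (Suc M) K" using ab bT zS uz by simp
        have full: "set (map (\<lambda>v. v@[True]) R1) = ?S" if G: "Gw p (Suc M) K \<alpha>"
        proof -
          have "Gw p M (K-1) u \<and> M < (p+1)*K" using Gw_inv[of p M K u b] G ab notz bT by auto
          then have "set R1 = ?A1" "?A0 = {}" using R1(4) C_bound[of _ M p K] by auto
          then show ?thesis using dec by simp
        qed
        show ?thesis using gc sp_map[OF R1(2)] last notz full ab bT
          by (intro exI[of _ "map (\<lambda>v. v@[True]) R1"]) auto
      next
        case uz: True
        have aZ: "\<alpha> = zw (Suc M) K" using ab bT uz zS by simp
        have b1: "(p+1)*(K-1) \<le> M" using bnd K' by simp
        obtain R1 where R1: "gcomp ?A1 [u] R1" "suffix_partitioned R1" "last R1 = Ef p M (K-1)"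
          "set R1 = ?A1"
          using Suc.IH[OF uA1] uz G1[of p "K-1" M] b1 by blast
        have g1: "gcomp {v. v@[True] \<in> ?S} [u] R1" using R1(1) c1 by simp
        have ne1: "R1 \<noteq> []" using gcomp_ne[OF R1(1)] by simp
        note E1 = Ef_props[OF b1]
        have eA1: "Ef p M (K-1) \<in> ?A1" using E1 by blast
        have lz: "length (last R1) = M" using R1(3) eA1 by (simp add: C_def)
        show ?thesis
        proof (cases "M < (p+1)*K")
          case tight: True
          have A0e: "?A0 = {}" using tight C_bound[of _ M p K] by auto
          have stop1: "greedy_next ?S ([] @ map (\<lambda>v. v@[True]) R1) (last R1 @ [True]) = None"
            using A0e c0 by (intro exit_none[OF stuck[OF g1] lz nc1(1)]) auto
          have "gcomp ?S (map (\<lambda>v. v@[True]) R1) (map (\<lambda>v. v@[True]) R1)"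
            using stop1 ne1 by (intro stop) (simp add: last_map)
          then have gc: "gcomp ?S ([] @ map (\<lambda>v. v@[True]) [u]) (map (\<lambda>v. v@[True]) R1)"
            using block[OF g1 refl l1 nc1(1), of "map (\<lambda>v. v@[True]) R1"] uA1 c1 by simp
          have last: "last (map (\<lambda>v. v@[True]) R1) = Ef p (Suc M) K"
            using ne1 R1(3) tight Knz by (simp add: last_map)
          have full: "set (map (\<lambda>v. v@[True]) R1) = ?S" using dec A0e R1(4) by simp
          have gca: "gcomp ?S [\<alpha>] (map (\<lambda>v. v@[True]) R1)" using gc ab bT by simp
          show ?thesis using gca sp_map[OF R1(2)] last full aZ Knz by blast
        next
          case nt: False
          then have b2: "(p+1)*K \<le> M" by simp
          let ?e = "Ef p M (K-1)"
          let ?q = "max (tpos ?e) ((p+1)*K - 1)"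
          let ?\<beta> = "ins p K ?e"
          have bb: "(p+1)*(K-1+1) \<le> M" using b2 K' by simp
          have "tpos ?e < M \<and> Gw p M (K-1+1) (ins p (K-1+1) ?e)" using E1 bb by blast
          then have tE: "tpos ?e < M" and G\<beta>: "Gw p M K ?\<beta>" using K' by simp_all
          have \<beta>def: "?\<beta> = ?e[?q := True]" by (simp add: ins_def)
          have T1': "greedy_next ?S ([] @ map (\<lambda>v. v@[True]) R1) (last R1 @ [True]) =
              Some ((last R1)[max (tpos (last R1)) ((p+1)*K - 1) := True] @ [False])"
          proof -
            have c1': "(M, max (tpos (last R1)) ((p+1)*K - 1)) \<in> cands ?S ([] @ map (\<lambda>v. v@[True]) R1) (last R1 @ [True])"
              using T1_cands(1)[OF eA1 K1 tE b2, where Q = R1] R1(3) by simp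
            have c2': "\<And>j. (M, j) \<in> cands ?S ([] @ map (\<lambda>v. v@[True]) R1) (last R1 @ [True]) \<Longrightarrow> max (tpos (last R1)) ((p+1)*K - 1) \<le> j"
              using T1_cands(2)[OF eA1 K1 tE b2, where Q = R1] R1(3) by simp
            show ?thesis by (rule exit_T1[OF stuck[OF g1] lz nc1(1) c1' c2'])
          qed
          have T1: "greedy_next ?S ([] @ map (\<lambda>v. v@[True]) R1) (last R1 @ [True]) = Some (?\<beta> @ [False])"
            using T1' R1(3) \<beta>def by simp
          have \<beta>A0: "?\<beta> \<in> ?A0" using Gw_C[OF G\<beta>] .
          obtain R2 where R2: "gcomp ?A0 [?\<beta>] R2" "suffix_partitioned R2"
            "(?\<beta> \<noteq> zw M K \<or> K = 0) \<longrightarrow> last R2 = zw M K"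
            "?\<beta> = zw M K \<longrightarrow> last R2 = Ef p M K" "set R2 = ?A0"
            using Suc.IH[OF \<beta>A0] G\<beta> by blast
          have g2: "gcomp {v. v@[False] \<in> ?S} [?\<beta>] R2" using R2(1) c0 by simp
          have ne2: "R2 \<noteq> []" using gcomp_ne[OF R2(1)] by simp
          have lz2: "length (last R2) = M" using ne2 R2(5) last_in_set[OF ne2] by (auto simp: C_def)
          let ?R = "map (\<lambda>v. v@[True]) R1 @ map (\<lambda>v. v@[False]) R2"
          have vis: "\<forall>v. v@[\<not>False] \<in> ?S \<longrightarrow> v@[\<not>False] \<in> set ?R"
          proof (intro allI impI)
            fix v assume "v@[\<not>False] \<in> ?S"
            then have "v \<in> set R1" using R1(4) c1 by auto
            then show "v@[\<not>False] \<in> set ?R" by simp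
          qed
          have stop2: "greedy_next ?S ?R (last R2 @ [False]) = None"
            by (rule exit_none[OF stuck[OF g2] lz2 nm1[of R1] vis])
          have "gcomp ?S ?R ?R" using stop2 ne2 by (intro stop) (simp add: last_map)
          then have gc2: "gcomp ?S (map (\<lambda>v. v@[True]) R1 @ map (\<lambda>v. v@[False]) [?\<beta>]) ?R"
            using block[OF g2 refl l0 nm1[of R1], where R = ?R] \<beta>A0 c0 by simp
          have T1n: "greedy_next ?S (map (\<lambda>v. v@[True]) R1) (last (map (\<lambda>v. v@[True]) R1)) = Some (?\<beta> @ [False])"
            using T1 ne1 by (simp add: last_map)
          have gc2': "gcomp ?S (map (\<lambda>v. v@[True]) R1 @ [?\<beta> @ [False]]) ?R" using gc2 by simp
          have gc1: "gcomp ?S (map (\<lambda>v. v@[True]) R1) ?R" by (rule step[OF T1n gc2'])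
          have gc: "gcomp ?S ([] @ map (\<lambda>v. v@[True]) [u]) ?R"
            using block[OF g1 refl l1 nc1(1), of ?R] gc1 uA1 c1 by simp
          have last: "last ?R = Ef p (Suc M) K"
          proof (cases "?\<beta> = zw M K")
            case True then show ?thesis using R2(4) ne2 Knz nt by (simp add: last_map)
          next
            case False then show ?thesis using R2(3) ne2 Knz nt by (simp add: last_map)
          qed
          have full: "set ?R = ?S" by (simp add: dec R1(4) R2(5))
          have gca: "gcomp ?S [\<alpha>] ?R" using gc ab bT by simp
          show ?thesis using gca sp_two[OF R1(2) R2(2)] last full aZ Knz by blast
        qed
      qed
    next
      case bF: False
      have uA0: "u \<in> ?A0" using Suc.prems ab bF C_snoc by simp
      have b2: "(p+1)*K \<le> M" using C_bound[OF uA0] .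
      have "K \<le> (p+1)*K" by simp
      then have KM0: "K \<le> M" using b2 by linarith
      obtain M' where M': "M = Suc M'" using KM0 K1 by (cases M) auto
      have notz: "\<alpha> \<noteq> zw (Suc M) K" using ab bF zS by simp
      have zA0: "zw M K \<in> ?A0" using zw_C[OF b2] .
      obtain R1 where R1: "gcomp ?A0 [u] R1" "suffix_partitioned R1"
          "(u \<noteq> zw M K \<or> K = 0) \<longrightarrow> last R1 = zw M K"
          "u = zw M K \<longrightarrow> last R1 = Ef p M K" "Gw p M K u \<longrightarrow> set R1 = ?A0"
        using Suc.IH[OF uA0] by blast
      have g1: "gcomp {v. v@[False] \<in> ?S} [u] R1" using R1(1) c0 by simp
      have ne1: "R1 \<noteq> []" using gcomp_ne[OF R1(1)] by simp
      have lA0: "last R1 \<in> ?A0" using ne1 comp_props(3)[OF R1(1)] uA0 last_in_set[OF ne1] by auto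
      have lz1: "length (last R1) = M" using lA0 by (simp add: C_def)
      have T2: "greedy_next ?S ([] @ map (\<lambda>v. v@[False]) R1) (last R1 @ [False]) =
           Some (rl (last R1) @ [True])"
      proof -
        have c1': "(tpos (last R1) - 1, M) \<in> cands ?S ([] @ map (\<lambda>v. v@[False]) R1) (last R1 @ [False])"
          using T2_cands(1)[OF lA0 K1, where Q = R1] by simp
        have c2': "\<And>i. (i, M) \<in> cands ?S ([] @ map (\<lambda>v. v@[False]) R1) (last R1 @ [False]) \<Longrightarrow> i = tpos (last R1) - 1"
          using T2_cands(2)[OF lA0 K1, where Q = R1] by simp
        show ?thesis unfolding rl_def by (rule exit_T2[OF stuck[OF g1] lz1 nc1(2) c1' c2'])
      qed
      have \<gamma>A1: "rl (last R1) \<in> ?A1" using rl_C[OF lA0 K1] .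
      have zMK': "zw M K' \<in> ?A1" using zw_C[of p K' M] b2 K' by simp
      have zbit: "zw M K' ! (M - 1)" if "K' \<ge> 1"
      proof -
        have z: "zw M K' = zw M' (K'-1) @ [True]" using zw_snocT[of K' M'] M' that K' KM0 by simp
        have "length (zw M' (K'-1)) = M'" using K' KM0 M' by simp
        then have "(zw M' (K'-1) @ [True]) ! M'" by (metis nth_append_length)
        then show ?thesis using z M' by simp
      qed
      let ?\<gamma> = "rl (last R1)"
      have main2: "\<exists>R. gcomp ?S [\<alpha>] R \<and> suffix_partitioned R \<and> last R = zw (Suc M) K \<and>
          (set R1 = ?A0 \<longrightarrow> Gw p M (K-1) ?\<gamma> \<longrightarrow> set R = ?S)"
        if \<gamma>ne: "?\<gamma> \<noteq> zw M K' \<or> K' = 0" and fullK1: "K' = 0 \<longrightarrow> set R1 = ?A0"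
      proof -
        obtain R2 where R2: "gcomp ?A1 [?\<gamma>] R2" "suffix_partitioned R2"
            "(?\<gamma> \<noteq> zw M (K-1) \<or> K-1 = 0) \<longrightarrow> last R2 = zw M (K-1)"
            "?\<gamma> = zw M (K-1) \<longrightarrow> last R2 = Ef p M (K-1)"
            "Gw p M (K-1) ?\<gamma> \<longrightarrow> set R2 = ?A1"
          using Suc.IH[OF \<gamma>A1] by (elim exE conjE) (rule that)
        have lR2: "last R2 = zw M K'" using R2(3) \<gamma>ne K' by simp
        have g2: "gcomp {v. v@[True] \<in> ?S} [?\<gamma>] R2" using R2(1) c1 by simp
        have ne2: "R2 \<noteq> []" using gcomp_ne[OF R2(1)] by simp
        have lz2: "length (last R2) = M" using lR2 zMK' by (simp add: C_def)
        let ?R = "map (\<lambda>v. v@[False]) R1 @ map (\<lambda>v. v@[True]) R2"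
        have stop2: "greedy_next ?S ?R (last R2 @ [True]) = None"
        proof (cases "K' = 0")
          case True
          have vis: "\<forall>v. v@[\<not>True] \<in> ?S \<longrightarrow> v@[\<not>True] \<in> set ?R"
          proof (intro allI impI)
            fix v assume "v@[\<not>True] \<in> ?S"
            then have "v \<in> set R1" using fullK1 True c0 by auto
            then show "v@[\<not>True] \<in> set ?R" by simp
          qed
          show ?thesis by (rule exit_none[OF stuck[OF g2] lz2 nm0[of R1] vis])
        next
          case False
          then show ?thesis using zbit lR2 M' by (intro exit_z[OF stuck[OF g2] lz2 nm0[of R1]]) auto
        qed
        have "gcomp ?S ?R ?R" using stop2 ne2 by (intro stop) (simp add: last_map)
        then have gc2: "gcomp ?S (map (\<lambda>v. v@[False]) R1 @ map (\<lambda>v. v@[True]) [?\<gamma>]) ?R"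
          using block[OF g2 refl l1 nm0[of R1], where R = ?R] \<gamma>A1 c1 by simp
        have T2n: "greedy_next ?S (map (\<lambda>v. v@[False]) R1) (last (map (\<lambda>v. v@[False]) R1)) = Some (?\<gamma> @ [True])"
          using T2 ne1 by (simp add: last_map)
        have gc2': "gcomp ?S (map (\<lambda>v. v@[False]) R1 @ [?\<gamma> @ [True]]) ?R" using gc2 by simp
        have gc1: "gcomp ?S (map (\<lambda>v. v@[False]) R1) ?R" by (rule step[OF T2n gc2'])
        have gc: "gcomp ?S ([] @ map (\<lambda>v. v@[False]) [u]) ?R"
          using block[OF g1 refl l0 nc1(2), of ?R] gc1 uA0 c0 by simp
        have last: "last ?R = zw (Suc M) K" using lR2 ne2 zS K' by (simp add: last_map)
        have full: "set ?R = ?S" if "set R1 = ?A0" "Gw p M (K-1) ?\<gamma>"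
        proof -
          have "set R2 = ?A1" using R2(5) that by simp
          then show ?thesis using that by (simp add: dec Un_commute)
        qed
        have gca: "gcomp ?S [\<alpha>] ?R" using gc ab bF by simp
        show ?thesis using gca sp_two[OF R1(2) R2(2)] last full by blast
      qed
      show ?thesis
      proof (cases "u = zw M K")
        case uz: False
        have lR1: "last R1 = zw M K" using R1(3) uz by simp
        have zK: "zw M K = zw M' K' @ [True]" using zw_snocT[of K M'] M' K' KM0 by simp
        have \<gamma>: "?\<gamma> = zw M' K' @ [False]" using lR1 zK rl_snocT by simp
        have G\<gamma>: "Gw p M (K-1) ?\<gamma>"
        proof -
          have "(p+1)*K' \<le> M'" using b2 K' M' by simp
          then show ?thesis using \<gamma> G1[of p K' M'] G2 K' M' by simp
        qed
        have \<gamma>ne: "?\<gamma> \<noteq> zw M K' \<or> K' = 0"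
        proof (cases "K' = 0")
          case False
          have "zw M K' = zw M' (K'-1) @ [True]" using zw_snocT[of K' M'] M' False K' KM0 by simp
          then show ?thesis using \<gamma> by simp
        qed simp
        have fk: "K' = 0 \<longrightarrow> set R1 = ?A0"
        proof
          assume k0: "K' = 0"
          then have "u \<in> C M p 1" using uA0 K' by simp
          then have "Gw p M K u" using C1_G K' k0 by simp
          then show "set R1 = ?A0" using R1(5) by simp
        qed
        obtain R where R: "gcomp ?S [\<alpha>] R" "suffix_partitioned R" "last R = zw (Suc M) K"
            "set R1 = ?A0 \<longrightarrow> Gw p M (K-1) ?\<gamma> \<longrightarrow> set R = ?S"
          using main2[OF \<gamma>ne fk] by blast
        have "Gw p (Suc M) K \<alpha> \<Longrightarrow> Gw p M K u" using Gw_inv[of p M K u b] ab bF notz by auto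
        then show ?thesis using R R1(5) G\<gamma> notz by blast
      next
        case uz: True
        have lR1: "last R1 = Ef p M K" using R1(4) uz by simp
        have fR1: "set R1 = ?A0" using R1(5) uz G1[OF b2] by simp
        note E2 = Ef_props[OF b2]
        have G\<gamma>: "Gw p M (K-1) ?\<gamma>" using E2 lR1 K1 by simp
        have \<gamma>ne: "?\<gamma> \<noteq> zw M K' \<or> K' = 0"
        proof (cases "K' = 0")
          case False
          then show ?thesis using rl_ne_zw[OF lA0, of] K' by simp
        qed simp
        obtain R where R: "gcomp ?S [\<alpha>] R" "suffix_partitioned R" "last R = zw (Suc M) K"
            "set R1 = ?A0 \<longrightarrow> Gw p M (K-1) ?\<gamma> \<longrightarrow> set R = ?S"
          using main2[OF \<gamma>ne] fR1 by blast
        then show ?thesis using fR1 G\<gamma> notz by blast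
      qed
    qed
  qed
qed



lemma C_finite: "finite (C n p k)"
proof -
  have "C n p k \<subseteq> {xs. set xs \<subseteq> (UNIV :: bool set) \<and> length xs = n}" by (auto simp: C_def)
  moreover have "finite {xs. set xs \<subseteq> (UNIV :: bool set) \<and> length xs = n}"
    by (rule finite_lists_length_eq) simp
  ultimately show ?thesis by (rule finite_subset)
qed

theorem lemma4:
  fixes p n k :: nat and \<alpha> :: "bool list"
  assumes "n \<ge> 1" and "n \<ge> (p + 1) * k" and "\<alpha> \<in> C n p k"
  shows "suffix_partitioned (D n p k \<alpha>)"
proof -
  obtain R where R: "gcomp (C n p k) [\<alpha>] R" "suffix_partitioned R"
    using main[OF assms(3)] by blast
  have "gcomp (C n p k) [\<alpha>] (greedy_aux (C n p k) (card (C n p k)) [\<alpha>])"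
    using assms(3) by (intro comp_greedy_aux[OF C_finite]) auto
  then have "D n p k \<alpha> = R" using R(1) comp_det by (simp add: D_def greedy_def)
  then show ?thesis using R(2) by simp
qed


end
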